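(* Let $p$ be a positive integer and write $2p=3m+r$ with $r\in\{0,1,2\}$, and assume $m\ge 3$. Let $I$ be a configuration of $2p$ colored chips containing at least $m$ chips of each of the three colors (and no jokers or dominoes). Then there is a sequence of at most $p+4r+8\le p+16$ exchanges taking $I$ to a configuration with at least $p$ dominoes.
   Context: Game model: a configuration is a tuple $(a,b,c,x,d)$ of nonnegative integers: $a,b,c$ colored chips of three colors, $x$ jokers, $d$ dominoes. Exchanges: Rule 1: remove three chips, consisting of some number $j\in\{0,1,2,3\}$ of jokers together with $3-j$ colored chips of pairwise distinct colors, and add one domino and one joker. Rule 2: if $d\ge 3$, remove three dominoes and add seven jokers. *)

theory Defs
  imports Main
begin

text \<open>A configuration (a, b, c, x, d): a, b, c colored chips of the three colors,
  x jokers, d dominoes.\<close>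
type_synonym config = "nat \<times> nat \<times> nat \<times> nat \<times> nat"

fun dominoes :: "config \<Rightarrow> nat" where
  "dominoes (a, b, c, x, d) = d"

text \<open>One exchange. Rule 1 with j jokers (j = 0..3) and 3 - j colored chips of
  pairwise distinct colors: remove them, add one domino and one joker.
  Rule 2: remove three dominoes, add seven jokers.\<close>
inductive step :: "config \<Rightarrow> config \<Rightarrow> bool" where
  r1_j0:  "step (Suc a, Suc b, Suc c, x, d) (a, b, c, Suc x, Suc d)"
| r1_j1ab: "step (Suc a, Suc b, c, Suc x, d) (a, b, c, Suc x, Suc d)"
| r1_j1ac: "step (Suc a, b, Suc c, Suc x, d) (a, b, c, Suc x, Suc d)"
| r1_j1bc: "step (a, Suc b, Suc c, Suc x, d) (a, b, c, Suc x, Suc d)"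
| r1_j2a: "step (Suc a, b, c, Suc (Suc x), d) (a, b, c, Suc x, Suc d)"
| r1_j2b: "step (a, Suc b, c, Suc (Suc x), d) (a, b, c, Suc x, Suc d)"
| r1_j2c: "step (a, b, Suc c, Suc (Suc x), d) (a, b, c, Suc x, Suc d)"
| r1_j3:  "step (a, b, c, Suc (Suc (Suc x)), d) (a, b, c, Suc x, Suc d)"
| r2:     "step (a, b, c, x, Suc (Suc (Suc d))) (a, b, c, x + 7, d)"

end

theory Submission
  imports Defs
begin

lemma rp_trans: "(R ^^ m) x y \<Longrightarrow> (R ^^ n) y z \<Longrightarrow> (R ^^ (m + n)) x z"
  by (auto simp: relpowp_add)

lemma L0: "(step ^^ n) (a+n, b+n, c+n, x, d) (a, b, c, x+n, d+n)"
proof (induction n arbitrary: a b c x d)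
  case 0 then show ?case by simp
next
  case (Suc n)
  have "step (Suc a + n, Suc b + n, Suc c + n, x, d) (a+n, b+n, c+n, Suc x, Suc d)"
    using step.r1_j0[of "a+n" "b+n" "c+n" x d] by simp
  moreover have "(step ^^ n) (a+n, b+n, c+n, Suc x, Suc d) (a, b, c, Suc x+n, Suc d+n)"
    using Suc.IH .
  ultimately show ?case using relpowp_Suc_I2 by fastforce
qed

lemma La: "(step ^^ n) (a+n, b, c, x+n+1, d) (a, b, c, x+1, d+n)"
proof (induction n arbitrary: a x d)
  case 0 then show ?case by simp
next
  case (Suc n)
  have "step (Suc a + n, b, c, Suc (Suc (x + n)), d) (a+n, b, c, Suc (x+n), Suc d)"
    using step.r1_j2a[of "a+n" b c "x+n" d] by simp
  moreover have "(step ^^ n) (a+n, b, c, x+n+1, Suc d) (a, b, c, x+1, Suc d+n)"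
    using Suc.IH .
  ultimately show ?case using relpowp_Suc_I2 by fastforce
qed

lemma Lb: "(step ^^ n) (a, b+n, c, x+n+1, d) (a, b, c, x+1, d+n)"
proof (induction n arbitrary: b x d)
  case 0 then show ?case by simp
next
  case (Suc n)
  have "step (a, Suc b + n, c, Suc (Suc (x + n)), d) (a, b+n, c, Suc (x+n), Suc d)"
    using step.r1_j2b[of a "b+n" c "x+n" d] by simp
  moreover have "(step ^^ n) (a, b+n, c, x+n+1, Suc d) (a, b, c, x+1, Suc d+n)"
    using Suc.IH .
  ultimately show ?case using relpowp_Suc_I2 by fastforce
qed

lemma Lc: "(step ^^ n) (a, b, c+n, x+n+1, d) (a, b, c, x+1, d+n)"
proof (induction n arbitrary: c x d)
  case 0 then show ?case by simp
next
  case (Suc n)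
  have "step (a, b, Suc c + n, Suc (Suc (x + n)), d) (a, b, c+n, Suc (x+n), Suc d)"
    using step.r1_j2c[of a b "c+n" "x+n" d] by simp
  moreover have "(step ^^ n) (a, b, c+n, x+n+1, Suc d) (a, b, c, x+1, Suc d+n)"
    using Suc.IH .
  ultimately show ?case using relpowp_Suc_I2 by fastforce
qed

lemma L3: "(step ^^ n) (a, b, c, x+2*n+1, d) (a, b, c, x+1, d+n)"
proof (induction n arbitrary: x d)
  case 0 then show ?case by simp
next
  case (Suc n)
  have "step (a, b, c, Suc (Suc (Suc (x + 2*n))), d) (a, b, c, Suc (x+2*n), Suc d)"
    using step.r1_j3[of a b c "x+2*n" d] by simp
  moreover have "(step ^^ n) (a, b, c, x+2*n+1, Suc d) (a, b, c, x+1, Suc d+n)"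
    using Suc.IH .
  ultimately show ?case using relpowp_Suc_I2 by (fastforce simp: algebra_simps)
qed

theorem mainTheorem8:
  fixes p m r a b c :: nat
  assumes "p > 0"
    and "m = (2 * p) div 3" and "r = (2 * p) mod 3"
    and "m \<ge> 3"
    and "a + b + c = 2 * p"
    and "a \<ge> m" and "b \<ge> m" and "c \<ge> m"
  shows "(\<exists>k J. k \<le> p + 4 * r + 8 \<and> (step ^^ k) (a, b, c, 0, 0) J \<and> dominoes J \<ge> p)
         \<and> p + 4 * r + 8 \<le> p + 16"
proof
  have r2: "r \<le> 2" using assms(3) by simp
  have e: "3*m + r = 2*p" using assms(2,3) by simp
  obtain al be ga where abc: "a = al + m" "b = be + m" "c = ga + m"
    using assms(6-8) le_Suc_ex by (metis add.commute)
  have s: "al + be + ga = r" using abc e assms(5) by simp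
  obtain m' where mm: "m = m' + 3" using assms(4) by (metis add.commute le_Suc_ex)
  have ev: "even (m - r)" using e r2 mm by presburger
  obtain h where h: "m - r = 2*h" using ev by (metis evenE)
  have S1: "(step ^^ m) (a, b, c, 0, 0) (al, be, ga, m, m)"
    using L0[where a=al and n=m and b=be and c=ga and x=0 and d=0] abc by simp
  have "step (al, be, ga, m, m' + 3) (al, be, ga, m + 7, m')"
    using step.r2[of al be ga m m'] by (simp add: numeral_eq_Suc)
  then have S2: "(step ^^ 1) (al, be, ga, m, m) (al, be, ga, m + 7, m')"
    using mm by (auto simp: OO_def)
  have S3: "(step ^^ al) (al, be, ga, m + 7, m') (0, be, ga, m + 7 - al, m' + al)"
  proof -
    have "(step ^^ al) (0+al, be, ga, (m+6-al)+al+1, m') (0, be, ga, (m+6-al)+1, m'+al)" by (rule La)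
    moreover have "(m+6-al)+al+1 = m+7" "(m+6-al)+1 = m+7-al" using s r2 assms(4) by arith+
    ultimately show ?thesis by (simp add: ac_simps)
  qed
  have S4: "(step ^^ be) (0, be, ga, m + 7 - al, m' + al) (0, 0, ga, m + 7 - al - be, m' + al + be)"
  proof -
    have "(step ^^ be) (0, 0+be, ga, (m+6-al-be)+be+1, m'+al) (0, 0, ga, (m+6-al-be)+1, m'+al+be)" by (rule Lb)
    moreover have "(m+6-al-be)+be+1 = m+7-al" "(m+6-al-be)+1 = m+7-al-be" using s r2 assms(4) by arith+
    ultimately show ?thesis by (simp add: ac_simps)
  qed
  have S5: "(step ^^ ga) (0, 0, ga, m + 7 - al - be, m' + al + be) (0, 0, 0, m + 7 - r, m' + r)"
  proof -
    have A: "(step ^^ ga) (0, 0, 0+ga, (m+6-r)+ga+1, m'+al+be) (0, 0, 0, (m+6-r)+1, m'+al+be+ga)" by (rule Lc)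
    have e1: "(0::nat, 0::nat, 0+ga, (m+6-r)+ga+1, m'+al+be) = (0, 0, ga, m + 7 - al - be, m' + al + be)"
      using s r2 assms(4) by (simp; arith)
    have e2: "(0::nat, 0::nat, 0::nat, (m+6-r)+1, m'+al+be+ga) = (0, 0, 0, m + 7 - r, m' + r)"
      using s r2 assms(4) by (simp; arith)
    show ?thesis using A unfolding e1 e2 .
  qed
  have S6: "(step ^^ (h+3)) (0, 0, 0, m + 7 - r, m' + r) (0, 0, 0, 1, m' + r + h + 3)"
  proof -
    have "(step ^^ (h+3)) (0, 0, 0, 0+2*(h+3)+1, m'+r) (0, 0, 0, 0+1, m'+r+(h+3))" by (rule L3)
    moreover have "0+2*(h+3)+1 = m+7-r" using h r2 assms(4) by arith
    ultimately show ?thesis by (simp add: algebra_simps)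
  qed
  have h2: "m = r + 2*h" using h r2 assms(4) by arith
  have "(step ^^ (m + 1 + al + be + ga + (h+3))) (a, b, c, 0, 0) (0, 0, 0, 1, m' + r + h + 3)"
    by (rule rp_trans[OF rp_trans[OF rp_trans[OF rp_trans[OF rp_trans[OF S1 S2] S3] S4] S5] S6])
  moreover have "m + 1 + al + be + ga + (h+3) \<le> p + 4 * r + 8" using s h2 e by linarith
  moreover have "m' + r + h + 3 \<ge> p" using h2 e mm by linarith
  ultimately have "m + 1 + al + be + ga + (h+3) \<le> p + 4 * r + 8 \<and> (step ^^ (m + 1 + al + be + ga + (h+3))) (a, b, c, 0, 0) (0, 0, 0, 1, m' + r + h + 3) \<and> dominoes (0, 0, 0, 1, m' + r + h + 3) \<ge> p"
    by (simp only: dominoes.simps)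
  then show "\<exists>k J. k \<le> p + 4 * r + 8 \<and> (step ^^ k) (a, b, c, 0, 0) J \<and> dominoes J \<ge> p"
    by blast
next
  show "p + 4 * r + 8 \<le> p + 16" using assms(3) by simp
qed

end
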